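(* There is an absolute constant $C>0$ such that for every integer $N\ge 2$ and every integer $h$ with $0<|h|\le 2N^2$, \[ r_N(h) \le C N^2 \sum_{\substack{d\mid h\\ 1\le d\le N}} \frac{1}{d}, \qquad\text{and}\qquad r_N(0)\le C N^2\log N. \] Moreover, for every integer $k\ge 2$ there is a constant $C_k>0$ such that $I_k(N)\le C_k N^{2k+2}$ for all integers $N\ge 2$.
   Context: For a positive integer $N$ and $h\in\mathbb{Z}$, let $r_N(h)$ be the number of tuples $(a_1,a_2,a_3,a_4)\in([-N,N]\cap\mathbb{Z})^4$ with $a_1a_2-a_3a_4=h$. For an integer $k\ge 2$, let $I_k(N)=\sum_{h\in\mathbb{Z}} r_N(h)^k$. *)

theory Defs
  imports "HOL-Analysis.Analysis"
begin

definition rN :: "nat \<Rightarrow> int \<Rightarrow> nat" where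
  "rN N h = card {(a1::int, a2::int, a3::int, a4::int).
      a1 \<in> {-int N..int N} \<and> a2 \<in> {-int N..int N} \<and>
      a3 \<in> {-int N..int N} \<and> a4 \<in> {-int N..int N} \<and>
      a1 * a2 - a3 * a4 = h}"

text \<open>I_k(N) = sum over all integers h of r_N(h)^k. Only finitely many terms are
  nonzero, so this is the sum over the (finite) support of r_N.\<close>
definition IkN :: "nat \<Rightarrow> nat \<Rightarrow> nat" where
  "IkN k N = (\<Sum>h \<in> {h. rN N h \<noteq> 0}. rN N h ^ k)"

end

theory Submission
  imports Defs
begin

lemma ap_card:
  fixes A :: "int set" and m lo hi :: int
  assumes "A \<subseteq> {lo..hi}" "m > 0" "lo \<le> hi" "\<And>x y. x \<in> A \<Longrightarrow> y \<in> A \<Longrightarrow> m dvd (x - y)"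
  shows "real (card A) \<le> real_of_int (hi - lo) / real_of_int m + 1"
proof (cases "A = {}")
  case True then show ?thesis using assms
    by (auto simp: field_simps)
next
  case False
  have fin: "finite A" using assms(1) finite_subset by blast
  define a0 where "a0 = Min A"
  have a0A: "a0 \<in> A" using fin False a0_def by simp
  have a0le: "\<And>x. x \<in> A \<Longrightarrow> a0 \<le> x" using fin a0_def by simp
  define f where "f x = (x - a0) div m" for x
  have inj: "inj_on f A"
  proof (rule inj_onI)
    fix x y assume xy: "x \<in> A" "y \<in> A" "f x = f y"
    have "m dvd (x - a0)" "m dvd (y - a0)" using assms(4) xy a0A by auto
    then show "x = y" using xy(3) unfolding f_def
      by (metis assms(2) diff_add_cancel dvd_div_mult_self less_irrefl)
  qed
  have img: "f ` A \<subseteq> {0..(hi - lo) div m}"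
  proof
    fix z assume "z \<in> f ` A"
    then obtain x where x: "x \<in> A" "z = f x" by auto
    have "x \<le> hi" "lo \<le> a0" using x a0A assms(1) by auto
    then have "0 \<le> x - a0" "x - a0 \<le> hi - lo" using a0le x by force+
    then show "z \<in> {0..(hi - lo) div m}" using x assms(2) unfolding f_def
      by (auto intro: zdiv_mono1 pos_imp_zdiv_nonneg_iff[THEN iffD2])
  qed
  have "card A = card (f ` A)" using inj by (simp add: card_image)
  also have "\<dots> \<le> card {0..(hi - lo) div m}" using img by (intro card_mono) auto
  finally have c1: "card A \<le> nat ((hi - lo) div m + 1)" by simp
  have q0: "0 \<le> (hi - lo) div m" using assms(2,3) by (simp add: pos_imp_zdiv_nonneg_iff)
  have "int (card A) \<le> (hi - lo) div m + 1" using c1 q0 by linarith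
  then have "real_of_int (int (card A)) \<le> real_of_int ((hi - lo) div m + 1)" by (rule of_int_le_iff[THEN iffD2])
  then have "real (card A) \<le> real_of_int ((hi - lo) div m) + 1" by simp
  also have "real_of_int ((hi - lo) div m) \<le> real_of_int (hi - lo) / real_of_int m"
    using real_of_int_div4[of "hi - lo" m] by simp
  finally show ?thesis by simp
qed


lemma dvd_diff_lemma:
  fixes c1 c3 u v :: int
  assumes "c1 * u = c3 * v" "c1 \<noteq> 0"
  shows "(c1 div gcd c1 c3) dvd v"
proof -
  define g where "g = gcd c1 c3"
  have g0: "g \<noteq> 0" using assms(2) g_def by simp
  have "c1 dvd c3 * v" using assms(1) by (metis dvd_triv_left)
  moreover have "c1 dvd c1 * v" by simp
  ultimately have "c1 dvd gcd (c1 * v) (c3 * v)" by simp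
  also have "gcd (c1 * v) (c3 * v) = \<bar>v\<bar> * g" unfolding g_def
    by (metis gcd_mult_distrib_int mult.commute)
  finally have d: "c1 dvd \<bar>v\<bar> * g" .
  have c1eq: "c1 = (c1 div g) * g" using g_def by simp
  have "(c1 div g) * g dvd \<bar>v\<bar> * g" using d c1eq by simp
  then have "(c1 div g) dvd \<bar>v\<bar>" using g0 by simp
  then show ?thesis unfolding g_def by simp
qed

definition Fset :: "nat \<Rightarrow> int \<Rightarrow> int \<Rightarrow> int \<Rightarrow> (int \<times> int) set" where
  "Fset N c1 c3 h = {(x,y). x \<in> {-int N..int N} \<and> y \<in> {-int N..int N} \<and> c1 * x - c3 * y = h}"

lemma Fset_finite: "finite (Fset N c1 c3 h)"
  unfolding Fset_def by (rule finite_subset[of _ "{-int N..int N} \<times> {-int N..int N}"]) auto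

lemma Fset_empty: "\<not> gcd c1 c3 dvd h \<Longrightarrow> Fset N c1 c3 h = {}"
  unfolding Fset_def by auto

lemma lemA1:
  assumes "c1 \<noteq> 0" "gcd c1 c3 dvd h"
  shows "real (card (Fset N c1 c3 h)) \<le> 2 * real N * real_of_int (gcd c1 c3) / \<bar>real_of_int c1\<bar> + 1"
proof -
  define g where "g = gcd c1 c3"
  define F where "F = Fset N c1 c3 h"
  define m where "m = \<bar>c1 div g\<bar>"
  have g0: "g > 0" using assms g_def by simp
  have c1eq: "c1 = (c1 div g) * g" using g_def by simp
  have m0: "m > 0" using c1eq assms(1) m_def by (metis mult_eq_0_iff zero_less_abs_iff)
  have mreal: "real_of_int m = \<bar>real_of_int c1\<bar> / real_of_int g"
  proof -
    have "\<bar>real_of_int c1\<bar> = real_of_int m * real_of_int g" unfolding m_def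
      using c1eq g0 by (metis abs_mult abs_of_pos of_int_abs of_int_mult)
    then show ?thesis using g0 by simp
  qed
  have inj: "inj_on snd F"
  proof (rule inj_onI)
    fix p q assume pq: "p \<in> F" "q \<in> F" "snd p = snd q"
    obtain x y where p: "p = (x,y)" by force
    obtain x' y' where q: "q = (x',y')" by force
    have "c1 * x - c3 * y = h" "c1 * x' - c3 * y' = h" using pq p q unfolding F_def Fset_def by auto
    moreover have "y = y'" using pq p q by simp
    ultimately have "c1 * x - c3 * y = c1 * x' - c3 * y" by simp
    then have "c1 * x = c1 * x'" by simp
    then have "x = x'" using assms(1) by simp
    then show "p = q" using p q pq by simp
  qed
  have sub: "snd ` F \<subseteq> {-int N..int N}" unfolding F_def Fset_def by auto
  have dv: "m dvd (u - v)" if uv: "u \<in> snd ` F" "v \<in> snd ` F" for u v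
  proof -
    obtain x where x: "(x,u) \<in> F" using uv(1) by force
    obtain x' where x': "(x',v) \<in> F" using uv(2) by force
    have "c1 * x - c3 * u = h" "c1 * x' - c3 * v = h" using x x' unfolding F_def Fset_def by auto
    then have "c1 * (x - x') = c3 * (u - v)" by (simp add: algebra_simps)
    from dvd_diff_lemma[OF this assms(1)] show ?thesis unfolding m_def g_def by simp
  qed
  have "real (card (snd ` F)) \<le> real_of_int (int N - (- int N)) / real_of_int m + 1"
    by (rule ap_card[OF sub m0]) (auto simp: dv)
  also have "real_of_int (int N - (- int N)) / real_of_int m = 2 * real N * real_of_int g / \<bar>real_of_int c1\<bar>"
    using mreal g0 m0 assms(1) by (simp add: field_simps)
  finally show ?thesis using inj unfolding F_def g_def by (simp add: card_image)
qed

lemma Fset_swap: "Fset N c1 c3 h = (\<lambda>(y,x). (x,y)) ` Fset N c3 c1 (-h)"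
  unfolding Fset_def by (auto simp: image_iff)

lemma lemA3:
  assumes "c3 \<noteq> 0" "gcd c1 c3 dvd h"
  shows "real (card (Fset N c1 c3 h)) \<le> 2 * real N * real_of_int (gcd c1 c3) / \<bar>real_of_int c3\<bar> + 1"
proof -
  have "card (Fset N c1 c3 h) \<le> card (Fset N c3 c1 (-h))"
    by (subst Fset_swap) (rule card_image_le[OF Fset_finite])
  moreover have "real (card (Fset N c3 c1 (-h))) \<le> 2 * real N * real_of_int (gcd c3 c1) / \<bar>real_of_int c3\<bar> + 1"
    by (rule lemA1) (use assms in \<open>auto simp: gcd.commute\<close>)
  ultimately show ?thesis by (simp add: gcd.commute)
qed


definition Wt :: "int \<Rightarrow> int \<Rightarrow> real" where
  "Wt a1 a3 = (if \<bar>a3\<bar> \<le> \<bar>a1\<bar> then 1 / real_of_int \<bar>a1\<bar> else 0) + (if \<bar>a1\<bar> \<le> \<bar>a3\<bar> then 1 / real_of_int \<bar>a3\<bar> else 0)"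

lemma Wt_nonneg: "Wt a1 a3 \<ge> 0"
  unfolding Wt_def by auto

definition Tsum :: "nat \<Rightarrow> int \<Rightarrow> int \<Rightarrow> int \<Rightarrow> real" where
  "Tsum N a1 a3 h = (\<Sum>d\<in>{1..N}. if int d dvd a1 \<and> int d dvd a3 \<and> int d dvd h then real d * Wt a1 a3 else 0)"

lemma Tsum_nonneg: "Tsum N a1 a3 h \<ge> 0"
  unfolding Tsum_def by (intro sum_nonneg) (auto intro: Wt_nonneg mult_nonneg_nonneg)

lemma lemC:
  assumes "a1 \<in> {-int N..int N}" "a3 \<in> {-int N..int N}" "a1 \<noteq> 0 \<or> a3 \<noteq> 0"
  shows "real (card (Fset N a1 a3 h)) \<le> 1 + 2 * real N * Tsum N a1 a3 h"
proof (cases "gcd a1 a3 dvd h")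
  case False
  then show ?thesis using Fset_empty[OF False] Tsum_nonneg[of N a1 a3 h] by simp
next
  case True
  define g where "g = gcd a1 a3"
  have g0: "g > 0" using assms(3) g_def by auto
  have gle: "g \<le> int N"
  proof (cases "a1 = 0")
    case True then show ?thesis using assms g_def by auto
  next
    case False
    have "\<bar>g\<bar> \<le> \<bar>a1\<bar>" using dvd_imp_le_int[OF False, of g] g_def by simp
    then show ?thesis using assms(1) g0 by auto
  qed
  define G where "G = nat g"
  have GI: "G \<in> {1..N}" using g0 gle G_def by auto
  have Gg: "int G = g" using g0 G_def by simp
  have "real G * Wt a1 a3 = (if int G dvd a1 \<and> int G dvd a3 \<and> int G dvd h then real G * Wt a1 a3 else 0)"
    using Gg True g_def by simp
  also have "\<dots> \<le> Tsum N a1 a3 h" unfolding Tsum_def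
    by (rule member_le_sum[OF GI]) (auto intro: Wt_nonneg mult_nonneg_nonneg)
  finally have TG: "real_of_int g * Wt a1 a3 \<le> Tsum N a1 a3 h" using Gg by (metis of_int_of_nat_eq)
  show ?thesis
  proof (cases "\<bar>a3\<bar> \<le> \<bar>a1\<bar>")
    case True
    then have a10: "a1 \<noteq> 0" using assms(3) by auto
    have "1 / \<bar>real_of_int a1\<bar> \<le> Wt a1 a3" unfolding Wt_def using True by auto
    then have "real_of_int g / \<bar>real_of_int a1\<bar> \<le> Tsum N a1 a3 h"
      using TG g0 by (smt (verit, ccfv_SIG) divide_inverse mult_left_mono of_int_pos inverse_eq_divide)
    then have "2 * real N * real_of_int g / \<bar>real_of_int a1\<bar> \<le> 2 * real N * Tsum N a1 a3 h"
      by (metis mult_left_mono of_nat_0_le_iff times_divide_eq_right zero_le_mult_iff zero_le_numeral)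
    then show ?thesis using lemA1[of a1 a3 h N] a10 \<open>gcd a1 a3 dvd h\<close> g_def by simp
  next
    case False
    then have a30: "a3 \<noteq> 0" by auto
    have "1 / \<bar>real_of_int a3\<bar> \<le> Wt a1 a3" unfolding Wt_def using False by auto
    then have "real_of_int g / \<bar>real_of_int a3\<bar> \<le> Tsum N a1 a3 h"
      using TG g0 by (smt (verit, ccfv_SIG) divide_inverse mult_left_mono of_int_pos inverse_eq_divide)
    then have "2 * real N * real_of_int g / \<bar>real_of_int a3\<bar> \<le> 2 * real N * Tsum N a1 a3 h"
      by (metis mult_left_mono of_nat_0_le_iff times_divide_eq_right zero_le_mult_iff zero_le_numeral)
    then show ?thesis using lemA3[of a3 a1 h N] a30 \<open>gcd a1 a3 dvd h\<close> g_def by simp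
  qed
qed


lemma sum_if_const:
  fixes c :: real
  assumes "finite A"
  shows "(\<Sum>y\<in>A. if P y then c else 0) = c * real (card {y\<in>A. P y})"
  using sum.inter_filter[OF assms, of "\<lambda>_. c" P, symmetric] by simp

lemma cnt1:
  assumes "d \<ge> 1" "L \<ge> 0"
  shows "real (card {x\<in>{-L..L}. int d dvd x}) \<le> 2 * real_of_int L / real d + 1"
proof -
  have "real (card {x\<in>{-L..L}. int d dvd x}) \<le> real_of_int (L - (-L)) / real_of_int (int d) + 1"
    by (rule ap_card) (use assms in \<open>auto intro: dvd_diff\<close>)
  then show ?thesis by simp
qed

lemma cnt2:
  assumes "d \<ge> 1" "d \<le> N"
  shows "real (card {x\<in>{-int N..int N}. x \<noteq> 0 \<and> int d dvd x}) \<le> 2 * real N / real d"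
proof -
  define P where "P = {x\<in>{int d..int N}. int d dvd x}"
  define Q where "Q = {x\<in>{-int N..-int d}. int d dvd x}"
  have sub: "{x\<in>{-int N..int N}. x \<noteq> 0 \<and> int d dvd x} \<subseteq> P \<union> Q"
  proof
    fix x assume x: "x \<in> {x\<in>{-int N..int N}. x \<noteq> 0 \<and> int d dvd x}"
    then have "\<bar>int d\<bar> \<le> \<bar>x\<bar>" using dvd_imp_le_int by blast
    then show "x \<in> P \<union> Q" using x unfolding P_def Q_def by auto
  qed
  have cP: "real (card P) \<le> real_of_int (int N - int d) / real_of_int (int d) + 1"
    unfolding P_def by (rule ap_card) (use assms in \<open>auto intro: dvd_diff\<close>)
  have cQ: "real (card Q) \<le> real_of_int (- int d - (- int N)) / real_of_int (int d) + 1"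
    unfolding Q_def by (rule ap_card) (use assms in \<open>auto intro: dvd_diff\<close>)
  have e: "real_of_int (int N - int d) / real_of_int (int d) + 1 = real N / real d"
    using assms by (simp add: field_simps)
  have e2: "real_of_int (- int d - (- int N)) / real_of_int (int d) + 1 = real N / real d"
    using assms by (simp add: field_simps)
  have fin: "finite P" "finite Q"
    by (rule finite_subset[of P "{int d..int N}"], auto simp: P_def)
       (rule finite_subset[of Q "{-int N..-int d}"], auto simp: Q_def)
  have "card {x\<in>{-int N..int N}. x \<noteq> 0 \<and> int d dvd x} \<le> card (P \<union> Q)"
    using sub fin by (intro card_mono) auto
  also have "\<dots> \<le> card P + card Q" by (rule card_Un_le)
  finally have "real (card {x\<in>{-int N..int N}. x \<noteq> 0 \<and> int d dvd x}) \<le> real (card P) + real (card Q)"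
    by (metis of_nat_add of_nat_mono)
  then show ?thesis using cP cQ e e2 by linarith
qed

lemma P1:
  assumes "d \<ge> 1" "d \<le> N"
  shows "(\<Sum>x\<in>{-int N..int N}. \<Sum>y\<in>{-int N..int N}.
           if int d dvd x \<and> int d dvd y \<and> \<bar>y\<bar> \<le> \<bar>x\<bar> then 1 / real_of_int \<bar>x\<bar> else 0)
         \<le> 6 * real N / (real d)^2"
proof -
  let ?I = "{-int N..int N}"
  have inner: "(\<Sum>y\<in>?I. if int d dvd x \<and> int d dvd y \<and> \<bar>y\<bar> \<le> \<bar>x\<bar> then 1 / real_of_int \<bar>x\<bar> else 0)
        \<le> (if x \<noteq> 0 \<and> int d dvd x then 3 / real d else 0)" if xI: "x \<in> ?I" for x
  proof (cases "x \<noteq> 0 \<and> int d dvd x")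
    case False
    then have "(\<Sum>y\<in>?I. if int d dvd x \<and> int d dvd y \<and> \<bar>y\<bar> \<le> \<bar>x\<bar> then 1 / real_of_int \<bar>x\<bar> else 0) = 0"
      by (intro sum.neutral) auto
    then show ?thesis using False by simp
  next
    case True
    have dx: "real d \<le> real_of_int \<bar>x\<bar>"
      using dvd_imp_le_int[of x "int d"] True by simp
    have "(\<Sum>y\<in>?I. if int d dvd x \<and> int d dvd y \<and> \<bar>y\<bar> \<le> \<bar>x\<bar> then 1 / real_of_int \<bar>x\<bar> else 0)
        = (\<Sum>y\<in>?I. if int d dvd y \<and> \<bar>y\<bar> \<le> \<bar>x\<bar> then 1 / real_of_int \<bar>x\<bar> else 0)"
      using True by simp
    also have "\<dots> = 1 / real_of_int \<bar>x\<bar> * real (card {y\<in>?I. int d dvd y \<and> \<bar>y\<bar> \<le> \<bar>x\<bar>})"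
      by (rule sum_if_const) simp
    also have "card {y\<in>?I. int d dvd y \<and> \<bar>y\<bar> \<le> \<bar>x\<bar>} \<le> card {y\<in>{-\<bar>x\<bar>..\<bar>x\<bar>}. int d dvd y}"
      by (rule card_mono[OF finite_subset[of _ "{-\<bar>x\<bar>..\<bar>x\<bar>}"]]) auto
    then have "real (card {y\<in>?I. int d dvd y \<and> \<bar>y\<bar> \<le> \<bar>x\<bar>}) \<le> 2 * real_of_int \<bar>x\<bar> / real d + 1"
      using cnt1[of d "\<bar>x\<bar>"] assms(1) by (meson abs_ge_zero of_nat_le_iff order_trans)
    then have "1 / real_of_int \<bar>x\<bar> * real (card {y\<in>?I. int d dvd y \<and> \<bar>y\<bar> \<le> \<bar>x\<bar>})
        \<le> 1 / real_of_int \<bar>x\<bar> * (2 * real_of_int \<bar>x\<bar> / real d + 1)"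
      by (intro mult_left_mono) auto
    also have "\<dots> = 2 / real d + 1 / real_of_int \<bar>x\<bar>" using True by (simp add: field_simps)
    also have "\<dots> \<le> 3 / real d"
    proof -
      have "1 / real_of_int \<bar>x\<bar> \<le> 1 / real d" using dx assms(1)
        by (intro divide_left_mono) auto
      then show ?thesis by simp
    qed
    finally show ?thesis using True by simp
  qed
  have "(\<Sum>x\<in>?I. \<Sum>y\<in>?I. if int d dvd x \<and> int d dvd y \<and> \<bar>y\<bar> \<le> \<bar>x\<bar> then 1 / real_of_int \<bar>x\<bar> else 0)
      \<le> (\<Sum>x\<in>?I. if x \<noteq> 0 \<and> int d dvd x then 3 / real d else 0)"
    by (rule sum_mono) (rule inner)
  also have "\<dots> = 3 / real d * real (card {x\<in>?I. x \<noteq> 0 \<and> int d dvd x})"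
    by (rule sum_if_const) simp
  also have "\<dots> \<le> 3 / real d * (2 * real N / real d)"
    by (intro mult_left_mono cnt2 assms) auto
  also have "\<dots> = 6 * real N / (real d)^2" by (simp add: power2_eq_square)
  finally show ?thesis .
qed


lemma lemD:
  assumes "d \<ge> 1" "d \<le> N"
  shows "(\<Sum>x\<in>{-int N..int N}. \<Sum>y\<in>{-int N..int N}.
           if int d dvd x \<and> int d dvd y then Wt x y else 0) \<le> 12 * real N / (real d)^2"
proof -
  let ?I = "{-int N..int N}"
  let ?A = "\<lambda>x y. if int d dvd x \<and> int d dvd y \<and> \<bar>y\<bar> \<le> \<bar>x\<bar> then 1 / real_of_int \<bar>x\<bar> else 0"
  have split: "(if int d dvd x \<and> int d dvd y then Wt x y else 0) = ?A x y + ?A y x" for x y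
    unfolding Wt_def by auto
  have e1: "(\<Sum>x\<in>?I. \<Sum>y\<in>?I. if int d dvd x \<and> int d dvd y then Wt x y else 0)
      = (\<Sum>x\<in>?I. \<Sum>y\<in>?I. ?A x y) + (\<Sum>x\<in>?I. \<Sum>y\<in>?I. ?A y x)"
    by (simp only: split sum.distrib)
  have e2: "(\<Sum>x\<in>?I. \<Sum>y\<in>?I. ?A y x) = (\<Sum>y\<in>?I. \<Sum>x\<in>?I. ?A y x)"
    by (rule sum.swap)
  have b1: "(\<Sum>x\<in>?I. \<Sum>y\<in>?I. ?A x y) \<le> 6 * real N / (real d)^2"
    using P1[OF assms] by simp
  have b2: "(\<Sum>y\<in>?I. \<Sum>x\<in>?I. ?A y x) \<le> 6 * real N / (real d)^2"
    using P1[OF assms] by simp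
  show ?thesis using e1 e2 b1 b2 by simp
qed

definition Sd :: "nat \<Rightarrow> int \<Rightarrow> real" where
  "Sd N h = (\<Sum>d\<in>{1..N}. if int d dvd h then 1 / real d else 0)"

lemma Fset00: "Fset N 0 0 h = (if h = 0 then {-int N..int N} \<times> {-int N..int N} else {})"
  unfolding Fset_def by auto

lemma card_Fset_bound:
  assumes "a1 \<in> {-int N..int N}" "a3 \<in> {-int N..int N}"
  shows "real (card (Fset N a1 a3 h)) \<le>
     (if a1 = 0 then (if a3 = 0 then (if h = 0 then (2 * real N + 1)^2 else 0) else 0) else 0)
     + 1 + 2 * real N * Tsum N a1 a3 h"
proof (cases "a1 = 0 \<and> a3 = 0")
  case True
  have "real (card ({-int N..int N} \<times> {-int N..int N})) = (2 * real N + 1)^2"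
    by (simp add: power2_eq_square)
  then have "real (card (Fset N a1 a3 h)) = (if h = 0 then (2 * real N + 1)^2 else 0)"
    using True Fset00[of N h] by simp
  then show ?thesis using True Tsum_nonneg[of N a1 a3 h] by simp
next
  case False
  then show ?thesis using lemC[OF assms, of h] by auto
qed


lemma Tsum_total:
  "(\<Sum>a1\<in>{-int N..int N}. \<Sum>a3\<in>{-int N..int N}. Tsum N a1 a3 h) \<le> 12 * real N * Sd N h"
proof -
  let ?I = "{-int N..int N}"
  let ?X = "\<lambda>d a1 a3. if int d dvd a1 \<and> int d dvd a3 then Wt a1 a3 else 0"
  have pt: "Tsum N a1 a3 h = (\<Sum>d\<in>{1..N}. if int d dvd h then real d * ?X d a1 a3 else 0)" for a1 a3
    unfolding Tsum_def by (intro sum.cong) auto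
  have "(\<Sum>a1\<in>?I. \<Sum>a3\<in>?I. Tsum N a1 a3 h)
      = (\<Sum>a1\<in>?I. \<Sum>a3\<in>?I. \<Sum>d\<in>{1..N}. if int d dvd h then real d * ?X d a1 a3 else 0)"
    by (simp only: pt)
  also have "\<dots> = (\<Sum>a1\<in>?I. \<Sum>d\<in>{1..N}. \<Sum>a3\<in>?I. if int d dvd h then real d * ?X d a1 a3 else 0)"
    by (intro sum.cong refl sum.swap)
  also have "\<dots> = (\<Sum>d\<in>{1..N}. \<Sum>a1\<in>?I. \<Sum>a3\<in>?I. if int d dvd h then real d * ?X d a1 a3 else 0)"
    by (rule sum.swap)
  also have "\<dots> = (\<Sum>d\<in>{1..N}. if int d dvd h then real d * (\<Sum>a1\<in>?I. \<Sum>a3\<in>?I. ?X d a1 a3) else 0)"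
    by (intro sum.cong refl) (auto simp: sum_distrib_left)
  also have "\<dots> \<le> (\<Sum>d\<in>{1..N}. if int d dvd h then real d * (12 * real N / (real d)^2) else 0)"
  proof (rule sum_mono)
    fix d assume d: "d \<in> {1..N}"
    have "(\<Sum>a1\<in>?I. \<Sum>a3\<in>?I. ?X d a1 a3) \<le> 12 * real N / (real d)^2" using d by (intro lemD) auto
    then have "real d * (\<Sum>a1\<in>?I. \<Sum>a3\<in>?I. ?X d a1 a3) \<le> real d * (12 * real N / (real d)^2)"
      by (rule mult_left_mono) simp
    then show "(if int d dvd h then real d * (\<Sum>a1\<in>?I. \<Sum>a3\<in>?I. ?X d a1 a3) else 0)
       \<le> (if int d dvd h then real d * (12 * real N / (real d)^2) else 0)" by simp
  qed
  also have "\<dots> = 12 * real N * Sd N h"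
    unfolding Sd_def sum_distrib_left
    by (intro sum.cong refl) (auto simp: power2_eq_square)
  finally show ?thesis .
qed

lemma rN_bound:
  "real (rN N h) \<le> (if h = 0 then (2 * real N + 1)^2 else 0) + (2 * real N + 1)^2 + 24 * (real N)^2 * Sd N h"
proof -
  let ?I = "{-int N..int N}"
  let ?T = "{(a1::int, a2::int, a3::int, a4::int).
      a1 \<in> ?I \<and> a2 \<in> ?I \<and> a3 \<in> ?I \<and> a4 \<in> ?I \<and> a1 * a2 - a3 * a4 = h}"
  let ?U = "\<lambda>a1 a3. (\<lambda>(a2,a4). (a1,a2,a3,a4)) ` Fset N a1 a3 h"
  have sub: "?T \<subseteq> (\<Union>a1\<in>?I. \<Union>a3\<in>?I. ?U a1 a3)"
  proof
    fix t assume t: "t \<in> ?T"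
    obtain a1 a2 a3 a4 where tt: "t = (a1,a2,a3,a4)" by (cases t) auto
    have "(a2,a4) \<in> Fset N a1 a3 h" using t tt unfolding Fset_def by auto
    then have "t \<in> ?U a1 a3" using tt by force
    moreover have "a1 \<in> ?I" "a3 \<in> ?I" using t tt by auto
    ultimately show "t \<in> (\<Union>a1\<in>?I. \<Union>a3\<in>?I. ?U a1 a3)" by blast
  qed
  have "card ?T \<le> card (\<Union>a1\<in>?I. \<Union>a3\<in>?I. ?U a1 a3)"
    by (rule card_mono[OF _ sub]) (auto intro!: finite_imageI Fset_finite)
  also have "\<dots> \<le> (\<Sum>a1\<in>?I. card (\<Union>a3\<in>?I. ?U a1 a3))" by (rule card_UN_le) simp
  also have "\<dots> \<le> (\<Sum>a1\<in>?I. \<Sum>a3\<in>?I. card (?U a1 a3))"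
    by (intro sum_mono card_UN_le) simp
  also have "\<dots> \<le> (\<Sum>a1\<in>?I. \<Sum>a3\<in>?I. card (Fset N a1 a3 h))"
    by (intro sum_mono card_image_le Fset_finite)
  finally have c1: "real (rN N h) \<le> (\<Sum>a1\<in>?I. \<Sum>a3\<in>?I. real (card (Fset N a1 a3 h)))"
    unfolding rN_def by (metis (no_types, lifting) of_nat_mono of_nat_sum sum.cong)
  also have "\<dots> \<le> (\<Sum>a1\<in>?I. \<Sum>a3\<in>?I.
     (if a1 = 0 then (if a3 = 0 then (if h = 0 then (2 * real N + 1)^2 else 0) else 0) else 0)
     + 1 + 2 * real N * Tsum N a1 a3 h)"
    by (intro sum_mono card_Fset_bound) auto
  also have "\<dots> = (if h = 0 then (2 * real N + 1)^2 else 0) + (2 * real N + 1)^2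
      + 2 * real N * (\<Sum>a1\<in>?I. \<Sum>a3\<in>?I. Tsum N a1 a3 h)"
  proof -
    let ?c = "(if h = 0 then (2 * real N + 1)^2 else 0) :: real"
    have in1: "(\<Sum>a3\<in>?I. if a1 = 0 then (if a3 = 0 then ?c else 0) else 0) = (if a1 = 0 then ?c else 0)" for a1 :: int
      by (cases "a1 = 0") simp_all
    have dd: "(\<Sum>a1\<in>?I. \<Sum>a3\<in>?I. if a1 = 0 then (if a3 = 0 then ?c else 0) else 0) = ?c"
      by (simp only: in1) simp
    have cI: "real (card ?I) = 2 * real N + 1" by simp
    have ones: "(\<Sum>a1\<in>?I. \<Sum>a3\<in>?I. (1::real)) = (2 * real N + 1)^2"
      using cI by (simp add: power2_eq_square)
    have "(\<Sum>a1\<in>?I. \<Sum>a3\<in>?I.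
       (if a1 = 0 then (if a3 = 0 then ?c else 0) else 0) + 1 + 2 * real N * Tsum N a1 a3 h)
      = (\<Sum>a1\<in>?I. \<Sum>a3\<in>?I. if a1 = 0 then (if a3 = 0 then ?c else 0) else 0)
        + (\<Sum>a1\<in>?I. \<Sum>a3\<in>?I. (1::real))
        + 2 * real N * (\<Sum>a1\<in>?I. \<Sum>a3\<in>?I. Tsum N a1 a3 h)"
      by (simp only: sum.distrib sum_distrib_left)
    then show ?thesis using dd ones by simp
  qed
  also have "\<dots> \<le> (if h = 0 then (2 * real N + 1)^2 else 0) + (2 * real N + 1)^2
      + 2 * real N * (12 * real N * Sd N h)"
    by (intro add_left_mono mult_left_mono Tsum_total) auto
  finally show ?thesis by (simp add: power2_eq_square algebra_simps)
qed


lemma jensen_pow: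
  fixes a y :: "'i \<Rightarrow> real"
  assumes "finite S" "S \<noteq> {}" "sum a S = 1" "\<And>i. i \<in> S \<Longrightarrow> a i \<ge> 0" "\<And>i. i \<in> S \<Longrightarrow> y i \<ge> 0"
  shows "(\<Sum>i\<in>S. a i * y i) ^ k \<le> (\<Sum>i\<in>S. a i * y i ^ k)"
proof -
  have cv: "convex_on {0::real..} (\<lambda>x. x ^ k)"
  proof (cases "even k")
    case True
    then show ?thesis using convex_on_subset[OF convex_power_even[OF True]] by auto
  next
    case False
    then show ?thesis using convex_power_odd by blast
  qed
  have "(\<lambda>x. x ^ k) (\<Sum>i\<in>S. a i *\<^sub>R y i) \<le> (\<Sum>i\<in>S. a i * (\<lambda>x. x ^ k) (y i))"
    by (rule convex_on_sum[OF assms(1,2) cv assms(3)]) (use assms in auto)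
  then show ?thesis by simp
qed

lemma Sd_ge1: "N \<ge> 1 \<Longrightarrow> Sd N h \<ge> 1"
proof -
  assume N: "N \<ge> 1"
  have "(if int 1 dvd h then 1 / real 1 else 0) \<le> Sd N h" unfolding Sd_def
    by (rule member_le_sum) (use N in auto)
  then show ?thesis by simp
qed

lemma Sd_nonneg: "Sd N h \<ge> 0"
  unfolding Sd_def by (intro sum_nonneg) auto

lemma Sd_alt: "Sd N h = (\<Sum>d \<in> {d::nat. 1 \<le> d \<and> d \<le> N \<and> int d dvd h}. 1 / real d)"
proof -
  have "{d::nat. 1 \<le> d \<and> d \<le> N \<and> int d dvd h} = {d\<in>{1..N}. int d dvd h}" by auto
  then show ?thesis unfolding Sd_def using sum.inter_filter[of "{1..N}" "\<lambda>d. 1 / real d" "\<lambda>d. int d dvd h"]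
    by simp
qed

lemma Sd_zero: "Sd N 0 = harm N"
  unfolding Sd_def harm_def by (simp add: inverse_eq_divide)

lemma harm_le_ln: "N \<ge> 1 \<Longrightarrow> harm N \<le> ln (real N) + 1"
  using euler_mascheroni_sequence_decreasing[of 1 N] by (simp add: harm_def)

lemma ln_ge_half: "N \<ge> 2 \<Longrightarrow> ln (real N) \<ge> 1/2"
proof -
  assume N: "N \<ge> 2"
  have "ln (1/2::real) \<le> 1/2 - 1" by (rule ln_le_minus_one) simp
  then have "ln (2::real) \<ge> 1/2" by (simp add: ln_div)
  moreover have "ln (2::real) \<le> ln (real N)" using N by simp
  ultimately show ?thesis by linarith
qed

lemma sq9: "N \<ge> 1 \<Longrightarrow> (2 * real N + 1)^2 \<le> 9 * (real N)^2"
proof -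
  assume "N \<ge> 1"
  then have n1: "1 \<le> real N" by simp
  have a: "1 \<le> real N * real N" using mult_mono[of 1 "real N" 1 "real N"] n1 by simp
  have b: "real N \<le> real N * real N" using mult_left_mono[of 1 "real N" "real N"] n1 by simp
  show ?thesis using a b by (simp add: power2_eq_square algebra_simps)
qed

lemma part1_nonzero:
  assumes "N \<ge> 1" "h \<noteq> 0"
  shows "real (rN N h) \<le> 33 * (real N)^2 * Sd N h"
proof -
  have "real (rN N h) \<le> (2 * real N + 1)^2 + 24 * (real N)^2 * Sd N h" using rN_bound[of N h] assms by simp
  also have "(2 * real N + 1)^2 \<le> 9 * (real N)^2" using sq9 assms by simp
  also have "9 * (real N)^2 \<le> 9 * (real N)^2 * Sd N h"
    using mult_left_mono[of 1 "Sd N h" "9 * (real N)^2"] Sd_ge1[OF assms(1), of h] by simp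
  finally show ?thesis by (simp add: algebra_simps)
qed

lemma part1_zero:
  assumes "N \<ge> 2"
  shows "real (rN N 0) \<le> 108 * (real N)^2 * ln (real N)"
proof -
  have N1: "N \<ge> 1" using assms by simp
  have l: "ln (real N) \<ge> 1/2" using ln_ge_half[OF assms] .
  have A: "real (rN N 0) \<le> 2 * (2 * real N + 1)^2 + 24 * (real N)^2 * harm N"
    using rN_bound[of N 0] Sd_zero[of N] by simp
  have B: "(2 * real N + 1)^2 \<le> 9 * (real N)^2" using sq9 N1 by simp
  have C: "24 * (real N)^2 * harm N \<le> 24 * (real N)^2 * (ln (real N) + 1)"
    using harm_le_ln[OF N1] by (intro mult_left_mono) auto
  have "real (rN N 0) \<le> 18 * (real N)^2 + 24 * (real N)^2 * (ln (real N) + 1)" using A B C by linarith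
  also have "\<dots> = (real N)^2 * (42 + 24 * ln (real N))" by (simp add: algebra_simps)
  also have "\<dots> \<le> (real N)^2 * (108 * ln (real N))" using l by (intro mult_left_mono) auto
  finally show ?thesis by simp
qed


definition Zs :: "real \<Rightarrow> real" where "Zs s = (\<Sum>n. real n powr (-s))"

lemma zeta_bound:
  assumes "s > 1" "finite A"
  shows "(\<Sum>d\<in>A. real d powr (-s)) \<le> Zs s"
  unfolding Zs_def
  by (rule sum_le_suminf) (use assms summable_real_powr_iff[of "-s"] in auto)

lemma Sd_pow_bound:
  assumes "k \<ge> 1" "N \<ge> 1"
  shows "Sd N h ^ k \<le> Zs (1 + 1 / (2 * real k)) ^ (k - 1) *
           (\<Sum>d\<in>{1..N}. if int d dvd h then real d powr (-1/2) else 0)"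
proof -
  define s where "s = 1 + 1 / (2 * real k)"
  have s1: "s > 1" using assms s_def by simp
  define D where "D = {d\<in>{1..N}. int d dvd h}"
  have finD: "finite D" unfolding D_def by simp
  have D1: "1 \<in> D" using assms D_def by simp
  have Dpos: "\<And>d. d \<in> D \<Longrightarrow> real d \<ge> 1" unfolding D_def by auto
  define Z where "Z = (\<Sum>d\<in>D. real d powr (-s))"
  have Zpos: "Z > 0" unfolding Z_def
    using D1 finD Dpos by (intro sum_pos2[of D 1]) auto
  have ZZ: "Z \<le> Zs s" unfolding Z_def by (rule zeta_bound[OF s1 finD])
  define a where "a d = real d powr (-s) / Z" for d :: nat
  define y where "y d = Z * real d powr (s - 1)" for d :: nat
  have Sd_D: "Sd N h = (\<Sum>d\<in>D. 1 / real d)"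
    unfolding Sd_def D_def using sum.inter_filter[of "{1..N}" "\<lambda>d. 1 / real d" "\<lambda>d. int d dvd h"] by simp
  have ay: "a d * y d = 1 / real d" if "d \<in> D" for d
  proof -
    have "a d * y d = real d powr (-s) * real d powr (s - 1)" unfolding a_def y_def using Zpos by simp
    also have "\<dots> = real d powr (-1)" by (simp add: powr_add[symmetric])
    also have "\<dots> = 1 / real d" using Dpos[OF that] by (simp add: powr_neg_one)
    finally show ?thesis .
  qed
  have sa: "sum a D = 1" unfolding a_def Z_def using Zpos Z_def by (simp add: sum_divide_distrib[symmetric])
  have "Sd N h ^ k = (\<Sum>d\<in>D. a d * y d) ^ k" using Sd_D ay by simp
  also have "\<dots> \<le> (\<Sum>d\<in>D. a d * y d ^ k)"
    by (rule jensen_pow[OF finD]) (use D1 Zpos sa in \<open>auto simp: a_def y_def\<close>)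
  also have "\<dots> = (\<Sum>d\<in>D. Z ^ (k - 1) * real d powr (-s + real k * (s - 1)))"
  proof (rule sum.cong[OF refl])
    fix d assume dD: "d \<in> D"
    have d0: "real d \<noteq> 0" using Dpos[OF dD] by simp
    have "a d * y d ^ k = real d powr (-s) / Z * (Z ^ k * (real d powr (s - 1)) ^ k)"
      unfolding a_def y_def by (simp add: power_mult_distrib)
    also have "(real d powr (s - 1)) ^ k = real d powr (real k * (s - 1))"
      using powr_power[OF d0] by simp
    also have "Z ^ k = Z * Z ^ (k - 1)" using assms(1) by (metis Suc_diff_1 less_le_trans zero_less_one power_Suc)
    finally have "a d * y d ^ k = Z ^ (k - 1) * (real d powr (-s) * real d powr (real k * (s - 1)))"
      using Zpos by (simp add: field_simps)
    moreover have "real d powr (-s) * real d powr (real k * (s - 1)) = real d powr (-s + real k * (s - 1))"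
      by (rule powr_add[symmetric])
    ultimately show "a d * y d ^ k = Z ^ (k - 1) * real d powr (-s + real k * (s - 1))"
      by simp
  qed
  also have "\<dots> \<le> (\<Sum>d\<in>D. Zs s ^ (k - 1) * real d powr (-1/2))"
  proof (rule sum_mono)
    fix d assume dD: "d \<in> D"
    have e: "-s + real k * (s - 1) \<le> -1/2" using assms unfolding s_def by (simp add: field_simps)
    have "real d powr (-s + real k * (s - 1)) \<le> real d powr (-1/2)"
      by (rule powr_mono[OF e Dpos[OF dD]])
    moreover have "Z ^ (k - 1) \<le> Zs s ^ (k - 1)" using Zpos ZZ by (intro power_mono) auto
    ultimately show "Z ^ (k - 1) * real d powr (-s + real k * (s - 1)) \<le> Zs s ^ (k - 1) * real d powr (-1/2)"
      using Zpos ZZ by (intro mult_mono) auto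
  qed
  also have "\<dots> = Zs s ^ (k - 1) * (\<Sum>d\<in>{1..N}. if int d dvd h then real d powr (-1/2) else 0)"
    unfolding D_def sum_distrib_left[symmetric]
    using sum.inter_filter[of "{1..N}" "\<lambda>d. real d powr (-1/2)" "\<lambda>d. int d dvd h"] by simp
  finally show ?thesis unfolding s_def .
qed


lemma moment:
  assumes "k \<ge> 1" "N \<ge> 1"
  shows "(\<Sum>h\<in>{-int (2*N^2)..int (2*N^2)} - {0}. Sd N h ^ k)
          \<le> Zs (1 + 1 / (2 * real k)) ^ (k - 1) * (4 * (real N)^2 * Zs (3/2))"
proof -
  define X where "X = 2 * N^2"
  define H where "H = {-int X..int X} - {0}"
  define K where "K = Zs (1 + 1 / (2 * real k)) ^ (k - 1)"
  have K0: "K \<ge> 0" unfolding K_def Zs_def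
    by (intro zero_le_power suminf_nonneg) (use assms summable_real_powr_iff[of "-(1 + 1 / (2 * real k))"] in auto)
  have finH: "finite H" unfolding H_def by simp
  have NX: "N \<le> X" unfolding X_def using assms(2) by (simp add: power2_eq_square)
  have "(\<Sum>h\<in>H. Sd N h ^ k) \<le> (\<Sum>h\<in>H. K * (\<Sum>d\<in>{1..N}. if int d dvd h then real d powr (-1/2) else 0))"
    unfolding K_def by (intro sum_mono Sd_pow_bound assms)
  also have "\<dots> = K * (\<Sum>d\<in>{1..N}. \<Sum>h\<in>H. if int d dvd h then real d powr (-1/2) else 0)"
    by (simp add: sum_distrib_left[symmetric] sum.swap[of _ H])
  also have "\<dots> = K * (\<Sum>d\<in>{1..N}. real d powr (-1/2) * real (card {h\<in>H. int d dvd h}))"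
    by (intro arg_cong[where f="\<lambda>x. K * x"] sum.cong refl sum_if_const finH)
  also have "\<dots> \<le> K * (\<Sum>d\<in>{1..N}. real d powr (-1/2) * (2 * real X / real d))"
  proof (rule mult_left_mono[OF sum_mono K0])
    fix d assume d: "d \<in> {1..N}"
    have "{h\<in>H. int d dvd h} = {x\<in>{-int X..int X}. x \<noteq> 0 \<and> int d dvd x}" unfolding H_def by auto
    then have "real (card {h\<in>H. int d dvd h}) \<le> 2 * real X / real d"
      using cnt2[of d X] d NX by auto
    then show "real d powr (-1/2) * real (card {h\<in>H. int d dvd h}) \<le> real d powr (-1/2) * (2 * real X / real d)"
      by (intro mult_left_mono) auto
  qed
  also have "\<dots> = K * (4 * (real N)^2 * (\<Sum>d\<in>{1..N}. real d powr (-(3/2))))"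
  proof -
    have "real d powr (-1/2) * (2 * real X / real d) = 4 * (real N)^2 * real d powr (-(3/2))" if "d \<in> {1..N}" for d
    proof -
      have d1: "real d > 0" using that by simp
      have ee: "(-(3/2)::real) = -1/2 + -1" by simp
      have "real d powr (-(3/2)) = real d powr (-1/2 + -1)" by (subst ee) (rule refl)
      also have "\<dots> = real d powr (-1/2) * real d powr (-1)" by (rule powr_add)
      also have "\<dots> = real d powr (-1/2) / real d" using d1 by simp
      finally show ?thesis unfolding X_def by simp
    qed
    then show ?thesis by (simp add: sum_distrib_left)
  qed
  also have "\<dots> \<le> K * (4 * (real N)^2 * Zs (3/2))"
    by (intro mult_left_mono K0 zeta_bound) auto
  finally show ?thesis unfolding H_def X_def K_def .
qed


lemma supp_rN:
  assumes "rN N h \<noteq> 0"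
  shows "h \<in> {-int (2*N^2)..int (2*N^2)}"
proof -
  let ?I = "{-int N..int N}"
  let ?S = "{(a1::int, a2::int, a3::int, a4::int).
      a1 \<in> ?I \<and> a2 \<in> ?I \<and> a3 \<in> ?I \<and> a4 \<in> ?I \<and> a1 * a2 - a3 * a4 = h}"
  have "?S \<noteq> {}" using assms unfolding rN_def by (metis card.empty)
  then obtain t where t: "t \<in> ?S" by blast
  obtain a1 a2 a3 a4 where tt: "t = (a1,a2,a3,a4)" by (cases t) auto
  have mem: "a1 \<in> ?I \<and> a2 \<in> ?I \<and> a3 \<in> ?I \<and> a4 \<in> ?I \<and> a1 * a2 - a3 * a4 = h"
    using t unfolding tt by simp
  then have b: "\<bar>a1\<bar> \<le> int N" "\<bar>a2\<bar> \<le> int N" "\<bar>a3\<bar> \<le> int N" "\<bar>a4\<bar> \<le> int N" and hh: "h = a1 * a2 - a3 * a4"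
    by auto
  have m1: "\<bar>a1 * a2\<bar> \<le> int N * int N" unfolding abs_mult using b by (intro mult_mono) auto
  have m2: "\<bar>a3 * a4\<bar> \<le> int N * int N" unfolding abs_mult using b by (intro mult_mono) auto
  have "\<bar>h\<bar> \<le> \<bar>a1 * a2\<bar> + \<bar>a3 * a4\<bar>" unfolding hh by (rule abs_triangle_ineq4)
  then have hb: "\<bar>h\<bar> \<le> 2 * (int N * int N)" using m1 m2 by linarith
  have e: "int (2*N^2) = 2 * (int N * int N)" by (simp add: power2_eq_square)
  show ?thesis unfolding e using hb by (simp add: abs_le_iff)
qed

lemma lnpow:
  assumes "N \<ge> 1" "k \<ge> 1"
  shows "ln (real N) ^ k \<le> (real k / 2) ^ k * (real N)^2"
proof -
  define a where "a = 2 / real k"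
  define x where "x = real N"
  have a0: "a > 0" using assms a_def by simp
  have x0: "x > 0" using assms x_def by simp
  have "a * ln x = ln (x powr a)" by simp
  also have "\<dots> \<le> x powr a - 1" using x0 by (intro ln_le_minus_one) simp
  also have "\<dots> \<le> x powr a" by simp
  finally have "a * ln x \<le> x powr a" .
  then have l1: "ln x \<le> x powr a / a" using a0 by (simp add: pos_le_divide_eq mult.commute)
  have l0: "ln x \<ge> 0" using assms x_def by simp
  have "ln x ^ k \<le> (x powr a / a) ^ k" using l1 l0 by (intro power_mono)
  also have "\<dots> = (x powr a) ^ k / a ^ k" by (rule power_divide)
  also have "(x powr a) ^ k = x powr (real k * a)" using powr_power[of x a k] x0 by simp
  also have "real k * a = 2" using assms a_def by simp
  also have "x powr (2::real) = x^2" using x0 powr_realpow[of x 2] by simp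
  also have "a ^ k = (2 / real k) ^ k" unfolding a_def ..
  also have "x^2 / (2 / real k) ^ k = (real k / 2) ^ k * x^2"
    by (simp add: power_divide)
  finally show ?thesis unfolding x_def .
qed

theorem lemma1p5:
  shows "(\<exists>C::real. C > 0 \<and>
           (\<forall>N::nat. \<forall>h::int. N \<ge> 2 \<longrightarrow> 0 < \<bar>h\<bar> \<longrightarrow> \<bar>h\<bar> \<le> 2 * (int N)^2 \<longrightarrow>
              real (rN N h) \<le> C * (real N)^2 * (\<Sum>d \<in> {d::nat. 1 \<le> d \<and> d \<le> N \<and> int d dvd h}. 1 / real d)) \<and>
           (\<forall>N::nat. N \<ge> 2 \<longrightarrow> real (rN N 0) \<le> C * (real N)^2 * ln (real N))) \<and>
         (\<forall>k::nat. k \<ge> 2 \<longrightarrow> (\<exists>Ck::real. Ck > 0 \<and>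
           (\<forall>N::nat. N \<ge> 2 \<longrightarrow> real (IkN k N) \<le> Ck * (real N) ^ (2 * k + 2))))"
proof (intro conjI)
  show "\<exists>C::real. C > 0 \<and>
           (\<forall>N::nat. \<forall>h::int. N \<ge> 2 \<longrightarrow> 0 < \<bar>h\<bar> \<longrightarrow> \<bar>h\<bar> \<le> 2 * (int N)^2 \<longrightarrow>
              real (rN N h) \<le> C * (real N)^2 * (\<Sum>d \<in> {d::nat. 1 \<le> d \<and> d \<le> N \<and> int d dvd h}. 1 / real d)) \<and>
           (\<forall>N::nat. N \<ge> 2 \<longrightarrow> real (rN N 0) \<le> C * (real N)^2 * ln (real N))"
  proof (intro exI[of _ 108] conjI allI impI)
    fix N :: nat and h :: int
    assume N: "N \<ge> 2" and h: "0 < \<bar>h\<bar>"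
    have "real (rN N h) \<le> 33 * (real N)^2 * Sd N h" using part1_nonzero[of N h] N h by simp
    also have "\<dots> \<le> 108 * (real N)^2 * Sd N h" using Sd_nonneg[of N h] by (intro mult_right_mono) auto
    finally show "real (rN N h) \<le> 108 * (real N)^2 * (\<Sum>d \<in> {d::nat. 1 \<le> d \<and> d \<le> N \<and> int d dvd h}. 1 / real d)"
      by (simp add: Sd_alt)
  next
    fix N :: nat assume N: "N \<ge> 2"
    show "real (rN N 0) \<le> 108 * (real N)^2 * ln (real N)" by (rule part1_zero[OF N])
  qed simp
next
  show "\<forall>k::nat. k \<ge> 2 \<longrightarrow> (\<exists>Ck::real. Ck > 0 \<and>
           (\<forall>N::nat. N \<ge> 2 \<longrightarrow> real (IkN k N) \<le> Ck * (real N) ^ (2 * k + 2)))"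
  proof (intro allI impI)
    fix k :: nat assume k: "k \<ge> 2"
    define Kz where "Kz = Zs (1 + 1 / (2 * real k)) ^ (k - 1)"
    define Ck where "Ck = 108 ^ k * (real k / 2) ^ k + 33 ^ k * (Kz * (4 * Zs (3/2)))"
    have Kz0: "Kz \<ge> 0" unfolding Kz_def Zs_def
      by (intro zero_le_power suminf_nonneg) (use k summable_real_powr_iff[of "-(1 + 1 / (2 * real k))"] in auto)
    have Z320: "Zs (3/2) \<ge> 0" unfolding Zs_def
      by (intro suminf_nonneg) (use summable_real_powr_iff[of "-(3/2)"] in auto)
    have Ck0: "Ck > 0" unfolding Ck_def using k Kz0 Z320
      by (intro add_pos_nonneg) (auto intro!: mult_nonneg_nonneg)
    show "\<exists>Ck::real. Ck > 0 \<and> (\<forall>N::nat. N \<ge> 2 \<longrightarrow> real (IkN k N) \<le> Ck * (real N) ^ (2 * k + 2))"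
    proof (intro exI[of _ Ck] conjI allI impI Ck0)
      fix N :: nat assume N: "N \<ge> 2"
      have N1: "N \<ge> 1" using N by simp
      have k1: "k \<ge> 1" using k by simp
      define B where "B = {-int (2*N^2)..int (2*N^2)}"
      have finB: "finite B" unfolding B_def by simp
      have suppB: "{h. rN N h \<noteq> 0} \<subseteq> B" unfolding B_def using supp_rN by blast
      have "real (IkN k N) = (\<Sum>h \<in> {h. rN N h \<noteq> 0}. real (rN N h) ^ k)" unfolding IkN_def by simp
      also have "\<dots> \<le> (\<Sum>h \<in> B. real (rN N h) ^ k)"
        by (rule sum_mono2[OF finB suppB]) auto
      also have "\<dots> = real (rN N 0) ^ k + (\<Sum>h \<in> B - {0}. real (rN N h) ^ k)"
        by (rule sum.remove[OF finB]) (simp add: B_def)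
      also have "real (rN N 0) ^ k \<le> 108 ^ k * (real k / 2) ^ k * (real N) ^ (2 * k + 2)"
      proof -
        have l0: "ln (real N) \<ge> 0" using N1 by simp
        have "real (rN N 0) ^ k \<le> (108 * (real N)^2 * ln (real N)) ^ k"
          by (intro power_mono part1_zero[OF N]) simp
        also have "\<dots> = 108 ^ k * (real N) ^ (2 * k) * ln (real N) ^ k"
          by (simp add: power_mult_distrib power_mult)
        also have "\<dots> \<le> 108 ^ k * (real N) ^ (2 * k) * ((real k / 2) ^ k * (real N)^2)"
          by (intro mult_left_mono lnpow N1 k1) auto
        also have "\<dots> = 108 ^ k * (real k / 2) ^ k * (real N) ^ (2 * k + 2)"
        proof -
          have e: "real N ^ (2 * k + 2) = real N ^ (2 * k) * (real N)^2" by (rule power_add)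
          show ?thesis unfolding e by (simp only: mult_ac)
        qed
        finally show ?thesis .
      qed
      also have "(\<Sum>h \<in> B - {0}. real (rN N h) ^ k) \<le> (\<Sum>h \<in> B - {0}. 33 ^ k * (real N) ^ (2 * k) * Sd N h ^ k)"
      proof (rule sum_mono)
        fix h assume "h \<in> B - {0}"
        then have h0: "h \<noteq> 0" by simp
        have "real (rN N h) ^ k \<le> (33 * (real N)^2 * Sd N h) ^ k"
          by (intro power_mono part1_nonzero N1 h0) simp
        then show "real (rN N h) ^ k \<le> 33 ^ k * (real N) ^ (2 * k) * Sd N h ^ k"
          by (simp add: power_mult_distrib power_mult)
      qed
      also have "\<dots> = 33 ^ k * (real N) ^ (2 * k) * (\<Sum>h \<in> B - {0}. Sd N h ^ k)"
        by (simp add: sum_distrib_left)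
      also have "\<dots> \<le> 33 ^ k * (real N) ^ (2 * k) * (Kz * (4 * (real N)^2 * Zs (3/2)))"
        unfolding B_def Kz_def by (intro mult_left_mono moment k1 N1) auto
      finally have "real (IkN k N) \<le> 108 ^ k * (real k / 2) ^ k * (real N) ^ (2 * k + 2)
          + 33 ^ k * (real N) ^ (2 * k) * (Kz * (4 * (real N)^2 * Zs (3/2)))" by simp
      also have "\<dots> = Ck * (real N) ^ (2 * k + 2)"
      proof -
        have e: "real N ^ (2 * k + 2) = real N ^ (2 * k) * (real N)^2" by (rule power_add)
        show ?thesis unfolding e Ck_def by (simp only: distrib_left distrib_right mult_ac)
      qed
      finally show "real (IkN k N) \<le> Ck * (real N) ^ (2 * k + 2)" .
    qed
  qed
qed

end
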